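(* Let $\mathcal I$ be an instance of $\mathrm{CSP}(\Gamma_0)$ on variables $u_1,\dots,u_n$, whose constraints are of the forms $(u_i=u_j\vee u_k=0)$, $(u_i=u_j\vee u_k=1)$, $u_i=1$, $u_i=0$ (interpreted over $\{0,1\}$). Let $\mathcal J$ be the instance on the $3n+3$ variables $x,x',y',x_1,\dots,x_n,y_1,\dots,y_n,z_1,\dots,z_n$ over the domain $\{0,1,2\}$ consisting of the following constraints (all indices range over $[n]=\{1,\dots,n\}$): $\mathcal C_1$: $N(x,x_i,y_i)$ for all $i$; $\mathcal C_2$: $N(x',z_i,y_i)$ for all $i$; $\mathcal C_3$: $N(y',z_i,x_i)$ for all $i$; $\mathcal C_4$: $N(t_1,t_2,t_3)$ for all $t_1,t_2,t_3\in\{x,x',x_1,\dots,x_n\}$; $\mathcal C_5$: $N(t_1,t_2,t_3)$ for all $t_1,t_2,t_3\in\{x,y',y_1,\dots,y_n\}$; $\mathcal C_6$: $N(t_1,t_2,t_3)$ for all $t_1,t_2,t_3\in\{x',y',z_1,\dots,z_n\}$; $\mathcal C_7$: $N(x_i,y_j,z_i)$ for all $i,j$; $\mathcal C_8$: $N(x_i,y_j,z_j)$ for all $i,j$; $\mathcal C_9$: $N(x,x_i,z_i)$ for all $i$; $\mathcal C_{10}$: $N(x,y_i,z_i)$ for all $i$; $\mathcal C_{11}$: $N(x_i,x_j,y_k)$ for each constraint $(u_i=u_j\vee u_k=0)$ of $\mathcal I$; $\mathcal C_{12}$: $N(y_i,y_j,x_k)$ for each constraint $(u_i=u_j\vee u_k=1)$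 of $\mathcal I$; $\mathcal C_{13}$: $x=x_i$ for each constraint $u_i=1$ of $\mathcal I$; $\mathcal C_{14}$: $x=y_i$ for each constraint $u_i=0$ of $\mathcal I$. Then $\mathcal I$ has a solution if and only if $\mathcal J$ has a surjective solution, i.e. an assignment of values in $\{0,1,2\}$ to all $3n+3$ variables satisfying all constraints of $\mathcal J$ and taking every value $0,1,2$.
   Context: $N=\{(a,b,c)\in\{0,1,2\}^{3}\mid \{a,b,c\}\neq\{0,1,2\}\}$, i.e. $N(a,b,c)$ holds iff $a,b,c$ are not pairwise distinct. $\Gamma_0$ is the constraint language on $\{0,1\}$ consisting of the relations $\{(x,y,z)\mid x=y\text{ or }z=0\}$, $\{(x,y,z)\mid x=y\text{ or }z=1\}$, $\{0\}$, $\{1\}$. A solution of $\mathcal I$ is an assignment $u_1,\dots,u_n\in\{0,1\}$ satisfying all its constraints. *)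

theory Defs
  imports Main
begin

definition N_rel :: "(nat \<times> nat \<times> nat) set" where
  "N_rel = {(a,b,c). a \<in> {0,1,2} \<and> b \<in> {0,1,2} \<and> c \<in> {0,1,2} \<and> {a,b,c} \<noteq> {0,1,2}}"

datatype con = EqOr0 nat nat nat | EqOr1 nat nat nat | Is1 nat | Is0 nat

fun con_vars :: "con \<Rightarrow> nat set" where
  "con_vars (EqOr0 i j k) = {i,j,k}"
| "con_vars (EqOr1 i j k) = {i,j,k}"
| "con_vars (Is1 i) = {i}"
| "con_vars (Is0 i) = {i}"

definition wf_instance :: "nat \<Rightarrow> con set \<Rightarrow> bool" where
  "wf_instance n I \<longleftrightarrow> (\<forall>c\<in>I. con_vars c \<subseteq> {1..n})"

fun sat_con :: "(nat \<Rightarrow> nat) \<Rightarrow> con \<Rightarrow> bool" where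
  "sat_con u (EqOr0 i j k) \<longleftrightarrow> u i = u j \<or> u k = 0"
| "sat_con u (EqOr1 i j k) \<longleftrightarrow> u i = u j \<or> u k = 1"
| "sat_con u (Is1 i) \<longleftrightarrow> u i = 1"
| "sat_con u (Is0 i) \<longleftrightarrow> u i = 0"

definition is_solution_I :: "nat \<Rightarrow> con set \<Rightarrow> (nat \<Rightarrow> nat) \<Rightarrow> bool" where
  "is_solution_I n I u \<longleftrightarrow> (\<forall>i\<in>{1..n}. u i \<in> {0,1}) \<and> (\<forall>c\<in>I. sat_con u c)"

datatype var = X | X' | Y' | XV nat | YV nat | ZV nat

definition vars_J :: "nat \<Rightarrow> var set" where
  "vars_J n = {X, X', Y'} \<union> XV ` {1..n} \<union> YV ` {1..n} \<union> ZV ` {1..n}"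

definition Ncons_J :: "nat \<Rightarrow> con set \<Rightarrow> (var \<times> var \<times> var) set" where
  "Ncons_J n I =
     {(X, XV i, YV i) | i. i \<in> {1..n}}
   \<union> {(X', ZV i, YV i) | i. i \<in> {1..n}}
   \<union> {(Y', ZV i, XV i) | i. i \<in> {1..n}}
   \<union> {(t1,t2,t3) | t1 t2 t3. {t1,t2,t3} \<subseteq> {X, X'} \<union> XV ` {1..n}}
   \<union> {(t1,t2,t3) | t1 t2 t3. {t1,t2,t3} \<subseteq> {X, Y'} \<union> YV ` {1..n}}
   \<union> {(t1,t2,t3) | t1 t2 t3. {t1,t2,t3} \<subseteq> {X', Y'} \<union> ZV ` {1..n}}
   \<union> {(XV i, YV j, ZV i) | i j. i \<in> {1..n} \<and> j \<in> {1..n}}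
   \<union> {(XV i, YV j, ZV j) | i j. i \<in> {1..n} \<and> j \<in> {1..n}}
   \<union> {(X, XV i, ZV i) | i. i \<in> {1..n}}
   \<union> {(X, YV i, ZV i) | i. i \<in> {1..n}}
   \<union> {(XV i, XV j, YV k) | i j k. EqOr0 i j k \<in> I}
   \<union> {(YV i, YV j, XV k) | i j k. EqOr1 i j k \<in> I}"

definition Eqcons_J :: "con set \<Rightarrow> (var \<times> var) set" where
  "Eqcons_J I = {(X, XV i) | i. Is1 i \<in> I} \<union> {(X, YV i) | i. Is0 i \<in> I}"

definition is_solution_J :: "nat \<Rightarrow> con set \<Rightarrow> (var \<Rightarrow> nat) \<Rightarrow> bool" where
  "is_solution_J n I f \<longleftrightarrow>
     (\<forall>v\<in>vars_J n. f v \<in> {0,1,2})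
   \<and> (\<forall>(a,b,c)\<in>Ncons_J n I. (f a, f b, f c) \<in> N_rel)
   \<and> (\<forall>(a,b)\<in>Eqcons_J I. f a = f b)"

definition surjective_solution_J :: "nat \<Rightarrow> con set \<Rightarrow> (var \<Rightarrow> nat) \<Rightarrow> bool" where
  "surjective_solution_J n I f \<longleftrightarrow> is_solution_J n I f \<and> f ` vars_J n = {0,1,2}"

end

theory Submission
  imports Defs
begin

definition Nf :: "nat \<Rightarrow> nat \<Rightarrow> nat \<Rightarrow> bool" where "Nf a b c \<longleftrightarrow> a = b \<or> b = c \<or> a = c"
definition loc where "loc a b c x y z \<longleftrightarrow> Nf a x y \<and> Nf b z y \<and> Nf c z x \<and> Nf a x z \<and> Nf a y z \<and> Nf x y z \<and> Nf a b x \<and> Nf a c y \<and> Nf b c z"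
definition crs where "crs a b c x y z x2 y2 z2 \<longleftrightarrow> Nf x y2 z \<and> Nf x y2 z2 \<and> Nf x x2 a \<and> Nf x x2 b \<and> Nf y y2 a \<and> Nf y y2 c \<and> Nf z z2 b \<and> Nf z z2 c"

lemma fin: "\<forall>a\<in>{0,1,2}. \<forall>b\<in>{0,1,2}. \<forall>c\<in>{0,1,2}. \<forall>x\<in>{0,1,2}. \<forall>y\<in>{0,1,2}. \<forall>z\<in>{0,1,2}. \<forall>x2\<in>{0,1,2}. \<forall>y2\<in>{0,1,2}. \<forall>z2\<in>{0,1,2}.
  loc a b c x y z \<longrightarrow> loc a b c x2 y2 z2 \<longrightarrow> crs a b c x y z x2 y2 z2 \<longrightarrow> crs a b c x2 y2 z2 x y z \<longrightarrow>
  (\<forall>w\<in>{0::nat,1,2}. w \<in> {a,b,c,x,y,z,x2,y2,z2}) \<longrightarrow> a \<noteq> b \<and> a \<noteq> c \<and> b \<noteq> c"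
  unfolding loc_def crs_def Nf_def by simp

lemma NrelD: "(a,b,c) \<in> N_rel \<Longrightarrow> Nf a b c"
proof (rule ccontr)
  assume h: "(a,b,c) \<in> N_rel" and n: "\<not> Nf a b c"
  have s: "{a,b,c} \<subseteq> {0,1,2}" and ne: "{a,b,c} \<noteq> {0,1,2}" using h unfolding N_rel_def by auto
  have "card {a,b,c} = 3" using n unfolding Nf_def by simp
  moreover have "card {0::nat,1,2} = 3" by simp
  ultimately have "{a,b,c} = {0,1,2}" using s by (intro card_subset_eq) auto
  then show False using ne by simp
qed
lemma NrelI: "a \<in> {0,1,2} \<Longrightarrow> b \<in> {0,1,2} \<Longrightarrow> c \<in> {0,1,2} \<Longrightarrow> Nf a b c \<Longrightarrow> (a,b,c) \<in> N_rel"
proof -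
  assume r: "a \<in> {0,1,2}" "b \<in> {0,1,2}" "c \<in> {0,1,2}" and n: "Nf a b c"
  have "card {a,b,c} \<le> 2" using n unfolding Nf_def by (auto simp: card_insert_if)
  moreover have "card {0::nat,1,2} = 3" by simp
  ultimately have "{a,b,c} \<noteq> {0,1,2}" by auto
  then show ?thesis using r unfolding N_rel_def by simp
qed

lemma typ_fin: "\<forall>a\<in>{0,1,2}. \<forall>b\<in>{0,1,2}. \<forall>c\<in>{0,1,2}. \<forall>x\<in>{0,1,2}. \<forall>y\<in>{0,1,2}. \<forall>z\<in>{0::nat,1,2}.
  a \<noteq> b \<longrightarrow> a \<noteq> c \<longrightarrow> b \<noteq> c \<longrightarrow> loc a b c x y z \<longrightarrow> (x = a \<and> y = c \<and> z = c) \<or> (x = b \<and> y = a \<and> z = b)"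
  unfolding loc_def Nf_def by simp

lemma typ_lem: "a \<in> {0,1,2} \<Longrightarrow> b \<in> {0,1,2} \<Longrightarrow> c \<in> {0,1,2} \<Longrightarrow> x \<in> {0,1,2} \<Longrightarrow> y \<in> {0,1,2} \<Longrightarrow> z \<in> {0,1,2}
  \<Longrightarrow> a \<noteq> b \<Longrightarrow> a \<noteq> c \<Longrightarrow> b \<noteq> c \<Longrightarrow> loc a b c x y z \<Longrightarrow> (x = a \<and> y = c \<and> z = c) \<or> (x = b \<and> y = a \<and> z = b)"
  by (rule typ_fin[rule_format]) simp_all

lemma Nf_sub: "p \<in> {s,t} \<Longrightarrow> q \<in> {s,t} \<Longrightarrow> r \<in> {s,t} \<Longrightarrow> Nf p q r"
  unfolding Nf_def by auto

lemma memC11: "EqOr0 i j k \<in> I \<Longrightarrow> (XV i, XV j, YV k) \<in> Ncons_J n I"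
  unfolding Ncons_J_def by (rule UnI1, rule UnI2) blast
lemma memC12: "EqOr1 i j k \<in> I \<Longrightarrow> (YV i, YV j, XV k) \<in> Ncons_J n I"
  unfolding Ncons_J_def by (rule UnI2) blast
lemma memL: assumes i: "i \<in> {1..n}" shows "(X, XV i, YV i) \<in> Ncons_J n I" "(X', ZV i, YV i) \<in> Ncons_J n I" "(Y', ZV i, XV i) \<in> Ncons_J n I"
      "(X, XV i, ZV i) \<in> Ncons_J n I" "(X, YV i, ZV i) \<in> Ncons_J n I" "(XV i, YV i, ZV i) \<in> Ncons_J n I"
      "(X, X', XV i) \<in> Ncons_J n I" "(X, Y', YV i) \<in> Ncons_J n I" "(X', Y', ZV i) \<in> Ncons_J n I"
  using i unfolding Ncons_J_def by (simp_all)
lemma memC: assumes i: "i \<in> {1..n}" and j: "j \<in> {1..n}" shows "(XV i, YV j, ZV i) \<in> Ncons_J n I" "(XV i, YV j, ZV j) \<in> Ncons_J n I"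
      "(XV i, XV j, X) \<in> Ncons_J n I" "(XV i, XV j, X') \<in> Ncons_J n I"
      "(YV i, YV j, X) \<in> Ncons_J n I" "(YV i, YV j, Y') \<in> Ncons_J n I"
      "(ZV i, ZV j, X') \<in> Ncons_J n I" "(ZV i, ZV j, Y') \<in> Ncons_J n I"
  using i j unfolding Ncons_J_def by (simp_all)
lemma h11: "a \<noteq> b \<Longrightarrow> a \<noteq> c \<Longrightarrow> b \<noteq> c \<Longrightarrow> xi = a \<or> xi = b \<Longrightarrow> xj = a \<or> xj = b
  \<Longrightarrow> (xl = a \<and> yl = c) \<or> (xl = b \<and> yl = a) \<Longrightarrow> Nf xi xj yl
  \<Longrightarrow> (if xi = a then 1 else 0::nat) = (if xj = a then 1 else 0) \<or> (if xl = a then 1 else 0::nat) = 0"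
  unfolding Nf_def by auto
lemma h12: "a \<noteq> b \<Longrightarrow> a \<noteq> c \<Longrightarrow> b \<noteq> c \<Longrightarrow> (xi = a \<and> yi = c) \<or> (xi = b \<and> yi = a) \<Longrightarrow> (xj = a \<and> yj = c) \<or> (xj = b \<and> yj = a)
  \<Longrightarrow> xl = a \<or> xl = b \<Longrightarrow> Nf yi yj xl
  \<Longrightarrow> (if xi = a then 1 else 0::nat) = (if xj = a then 1 else 0) \<or> (if xl = a then 1 else 0::nat) = 1"
  unfolding Nf_def by auto
lemma abc3_fin: "\<forall>a\<in>{0,1,2}. \<forall>b\<in>{0,1,2}. \<forall>c\<in>{0::nat,1,2}. 0 \<in> {a,b,c} \<longrightarrow> 1 \<in> {a,b,c} \<longrightarrow> 2 \<in> {a,b,c} \<longrightarrow> a \<noteq> b \<and> a \<noteq> c \<and> b \<noteq> c"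
  by simp

lemma abc3: "{a,b,c} = {0::nat,1,2} \<Longrightarrow> a \<noteq> b \<and> a \<noteq> c \<and> b \<noteq> c"
proof -
  assume h: "{a,b,c} = {0::nat,1,2}"
  have r: "a \<in> {0,1,2}" "b \<in> {0,1,2}" "c \<in> {0,1,2}" using h by blast+
  have "0 \<in> {a,b,c}" "1 \<in> {a,b,c}" "2 \<in> {a,b,c}" using h by simp_all
  then show ?thesis using abc3_fin[rule_format, OF r] by blast
qed

theorem lemma3p2:
  fixes n :: nat and I :: "con set"
  assumes "wf_instance n I"
  shows "(\<exists>u. is_solution_I n I u) \<longleftrightarrow> (\<exists>f. surjective_solution_J n I f)"
proof
  have wf: "\<And>c. c \<in> I \<Longrightarrow> con_vars c \<subseteq> {1..n}" using assms unfolding wf_instance_def by blast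
  assume "\<exists>u. is_solution_I n I u"
  then obtain u where us: "is_solution_I n I u" by blast
  define f where "f = (\<lambda>v. case v of X \<Rightarrow> 0 | X' \<Rightarrow> 1 | Y' \<Rightarrow> 2
     | XV i \<Rightarrow> (if u i = 1 then 0 else 1) | YV i \<Rightarrow> (if u i = 1 then 2 else 0)
     | ZV i \<Rightarrow> (if u i = 1 then 2 else 1::nat))"
  have rng: "\<And>v. f v \<in> {0,1,2}" unfolding f_def by (auto split: var.splits)
  have s4: "\<And>t. t \<in> {X, X'} \<union> XV ` {1..n} \<Longrightarrow> f t \<in> {0,1}" unfolding f_def by (auto split: if_splits)
  have s5: "\<And>t. t \<in> {X, Y'} \<union> YV ` {1..n} \<Longrightarrow> f t \<in> {0,2}" unfolding f_def by (auto split: if_splits)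
  have s6: "\<And>t. t \<in> {X', Y'} \<union> ZV ` {1..n} \<Longrightarrow> f t \<in> {1,2}" unfolding f_def by (auto split: if_splits)
  have sat: "\<And>c. c \<in> I \<Longrightarrow> sat_con u c" using us unfolding is_solution_I_def by blast
  have uin: "\<And>i. i \<in> {1..n} \<Longrightarrow> u i \<in> {0,1}" using us unfolding is_solution_I_def by blast
  have NC: "Nf (f p) (f q) (f r)" if H: "(p,q,r) \<in> Ncons_J n I" for p q r
    using H unfolding Ncons_J_def
    apply (elim UnE)
    subgoal by (auto simp: f_def Nf_def split: if_splits)
    subgoal by (auto simp: f_def Nf_def split: if_splits)
    subgoal by (auto simp: f_def Nf_def split: if_splits)
    subgoal premises P
    proof -
      from P have "p \<in> {X, X'} \<union> XV ` {1..n}" "q \<in> {X, X'} \<union> XV ` {1..n}" "r \<in> {X, X'} \<union> XV ` {1..n}" by auto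
      then show ?thesis using s4[of p] s4[of q] s4[of r] by (intro Nf_sub) auto
    qed
    subgoal premises P
    proof -
      from P have "p \<in> {X, Y'} \<union> YV ` {1..n}" "q \<in> {X, Y'} \<union> YV ` {1..n}" "r \<in> {X, Y'} \<union> YV ` {1..n}" by auto
      then show ?thesis using s5[of p] s5[of q] s5[of r] by (intro Nf_sub) auto
    qed
    subgoal premises P
    proof -
      from P have "p \<in> {X', Y'} \<union> ZV ` {1..n}" "q \<in> {X', Y'} \<union> ZV ` {1..n}" "r \<in> {X', Y'} \<union> ZV ` {1..n}" by auto
      then show ?thesis using s6[of p] s6[of q] s6[of r] by (intro Nf_sub) auto
    qed
    subgoal by (auto simp: f_def Nf_def split: if_splits)
    subgoal by (auto simp: f_def Nf_def split: if_splits)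
    subgoal by (auto simp: f_def Nf_def split: if_splits)
    subgoal by (auto simp: f_def Nf_def split: if_splits)
    subgoal premises P
    proof -
      from P obtain i j k where e: "p = XV i" "q = XV j" "r = YV k" "EqOr0 i j k \<in> I" by blast
      have "u i = u j \<or> u k = 0" using sat[OF e(4)] by simp
      then show ?thesis using e unfolding f_def Nf_def by (auto split: if_splits)
    qed
    subgoal premises P
    proof -
      from P obtain i j k where e: "p = YV i" "q = YV j" "r = XV k" "EqOr1 i j k \<in> I" by blast
      have "u i = u j \<or> u k = 1" using sat[OF e(4)] by simp
      then show ?thesis using e unfolding f_def Nf_def by (auto split: if_splits)
    qed
    done
  have EC: "f p = f q" if H: "(p,q) \<in> Eqcons_J I" for p q
  proof -
    from H consider (a) i where "p = X" "q = XV i" "Is1 i \<in> I" | (b) i where "p = X" "q = YV i" "Is0 i \<in> I"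
      unfolding Eqcons_J_def by blast
    then show ?thesis
    proof cases
      case a then show ?thesis using sat[OF a(3)] unfolding f_def by simp
    next
      case b then show ?thesis using sat[OF b(3)] unfolding f_def by simp
    qed
  qed
  have "is_solution_J n I f"
    unfolding is_solution_J_def using rng NC EC NrelI by auto
  moreover have "f ` vars_J n = {0,1,2}"
  proof
    show "f ` vars_J n \<subseteq> {0,1,2}" using rng by (simp add: image_subset_iff)
    have v: "X \<in> vars_J n" "X' \<in> vars_J n" "Y' \<in> vars_J n" unfolding vars_J_def by auto
    have e: "f X = 0" "f X' = 1" "f Y' = 2" unfolding f_def by simp_all
    have "0 \<in> f ` vars_J n" by (rule image_eqI[where x="X"]) (simp_all add: e v)
    moreover have "1 \<in> f ` vars_J n" by (rule image_eqI[where x="X'"]) (simp_all add: e v)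
    moreover have "2 \<in> f ` vars_J n" by (rule image_eqI[where x="Y'"]) (simp_all add: e v)
    ultimately show "{0,1,2} \<subseteq> f ` vars_J n" by blast
  qed
  ultimately show "\<exists>f. surjective_solution_J n I f" unfolding surjective_solution_J_def by blast
next
  have wf: "\<And>c. c \<in> I \<Longrightarrow> con_vars c \<subseteq> {1..n}" using assms unfolding wf_instance_def by blast
  assume "\<exists>f. surjective_solution_J n I f"
  then obtain f where fs: "surjective_solution_J n I f" by blast
  have sol: "is_solution_J n I f" and im: "f ` vars_J n = {0,1,2}"
    using fs unfolding surjective_solution_J_def by auto
  have rng: "\<And>v. v \<in> vars_J n \<Longrightarrow> f v \<in> {0,1,2}" using sol unfolding is_solution_J_def by blast
  have NC: "\<And>p q r. (p,q,r) \<in> Ncons_J n I \<Longrightarrow> Nf (f p) (f q) (f r)"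
    using sol NrelD unfolding is_solution_J_def by fast
  have EC: "\<And>p q. (p,q) \<in> Eqcons_J I \<Longrightarrow> f p = f q"
    using sol unfolding is_solution_J_def by fast
  define a where "a = f X"
  define b where "b = f X'"
  define c where "c = f Y'"
  have va: "X \<in> vars_J n" "X' \<in> vars_J n" "Y' \<in> vars_J n" unfolding vars_J_def by auto
  have vi: "\<And>i. i \<in> {1..n} \<Longrightarrow> XV i \<in> vars_J n \<and> YV i \<in> vars_J n \<and> ZV i \<in> vars_J n"
    unfolding vars_J_def by auto
  have ra: "a \<in> {0,1,2}" "b \<in> {0,1,2}" "c \<in> {0,1,2}" using rng va unfolding a_def b_def c_def by auto
  have ri: "\<And>i. i \<in> {1..n} \<Longrightarrow> f (XV i) \<in> {0,1,2} \<and> f (YV i) \<in> {0,1,2} \<and> f (ZV i) \<in> {0,1,2}"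
    using rng vi by blast
  have L: "loc a b c (f (XV i)) (f (YV i)) (f (ZV i))" if i: "i \<in> {1..n}" for i
  proof -
    have m: "(X, XV i, YV i) \<in> Ncons_J n I" "(X', ZV i, YV i) \<in> Ncons_J n I" "(Y', ZV i, XV i) \<in> Ncons_J n I"
      "(X, XV i, ZV i) \<in> Ncons_J n I" "(X, YV i, ZV i) \<in> Ncons_J n I" "(XV i, YV i, ZV i) \<in> Ncons_J n I"
      "(X, X', XV i) \<in> Ncons_J n I" "(X, Y', YV i) \<in> Ncons_J n I" "(X', Y', ZV i) \<in> Ncons_J n I"
      using memL[OF i] .
    show ?thesis unfolding loc_def a_def b_def c_def using NC[OF m(1)] NC[OF m(2)] NC[OF m(3)] NC[OF m(4)]
        NC[OF m(5)] NC[OF m(6)] NC[OF m(7)] NC[OF m(8)] NC[OF m(9)] by blast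
  qed
  have C: "crs a b c (f (XV i)) (f (YV i)) (f (ZV i)) (f (XV j)) (f (YV j)) (f (ZV j))"
    if i: "i \<in> {1..n}" and j: "j \<in> {1..n}" for i j
  proof -
    have m: "(XV i, YV j, ZV i) \<in> Ncons_J n I" "(XV i, YV j, ZV j) \<in> Ncons_J n I"
      "(XV i, XV j, X) \<in> Ncons_J n I" "(XV i, XV j, X') \<in> Ncons_J n I"
      "(YV i, YV j, X) \<in> Ncons_J n I" "(YV i, YV j, Y') \<in> Ncons_J n I"
      "(ZV i, ZV j, X') \<in> Ncons_J n I" "(ZV i, ZV j, Y') \<in> Ncons_J n I"
      using memC[OF i j] .
    show ?thesis unfolding crs_def a_def b_def c_def using NC[OF m(1)] NC[OF m(2)] NC[OF m(3)] NC[OF m(4)]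
        NC[OF m(5)] NC[OF m(6)] NC[OF m(7)] NC[OF m(8)] by blast
  qed
  have dist: "a \<noteq> b \<and> a \<noteq> c \<and> b \<noteq> c"
  proof (cases "n = 0")
    case True
    then have "vars_J n = {X, X', Y'}" unfolding vars_J_def by auto
    then have "{a,b,c} = {0,1,2}" using im unfolding a_def b_def c_def by auto
    then show ?thesis by (rule abc3)
  next
    case False
    have ex: "\<exists>i\<in>{1..n}. w \<in> {a,b,c,f (XV i), f (YV i), f (ZV i)}" if w: "w \<in> {0,1,2}" for w
    proof -
      obtain v where v: "v \<in> vars_J n" "f v = w" using w im by (metis imageE)
      have "1 \<in> {1..n}" using False by simp
      then show ?thesis using v unfolding vars_J_def a_def b_def c_def by auto
    qed
    obtain i0 where i0: "i0 \<in> {1..n}" "0 \<in> {a,b,c,f (XV i0), f (YV i0), f (ZV i0)}" using ex by blast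
    obtain i1 where i1: "i1 \<in> {1..n}" "1 \<in> {a,b,c,f (XV i1), f (YV i1), f (ZV i1)}" using ex by blast
    obtain i2 where i2: "i2 \<in> {1..n}" "2 \<in> {a,b,c,f (XV i2), f (YV i2), f (ZV i2)}" using ex by blast
    have G: "a \<noteq> b \<and> a \<noteq> c \<and> b \<noteq> c" if "i \<in> {1..n}" "j \<in> {1..n}"
       "\<forall>w\<in>{0::nat,1,2}. w \<in> {a,b,c,f (XV i), f (YV i), f (ZV i),f (XV j), f (YV j), f (ZV j)}" for i j
      using ra ri[OF that(1)] ri[OF that(2)]
      by (intro fin[rule_format, OF _ _ _ _ _ _ _ _ _ L[OF that(1)] L[OF that(2)] C[OF that(1) that(2)] C[OF that(2) that(1)] that(3)[rule_format]]) auto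
    from ra(1) consider "a = 0" | "a = 1" | "a = 2" by blast
    then show ?thesis
    proof cases
      case 1 then show ?thesis using G[OF i1(1) i2(1)] i1 i2 by auto
    next
      case 2 then show ?thesis using G[OF i0(1) i2(1)] i0 i2 by auto
    next
      case 3 then show ?thesis using G[OF i0(1) i1(1)] i0 i1 by auto
    qed
  qed
  have T: "(f (XV i) = a \<and> f (YV i) = c \<and> f (ZV i) = c) \<or> (f (XV i) = b \<and> f (YV i) = a \<and> f (ZV i) = b)"
    if i: "i \<in> {1..n}" for i
    using ri[OF i] dist by (intro typ_lem[OF ra(1) ra(2) ra(3) _ _ _ _ _ _ L[OF i]]) auto
  have Tx: "f (XV i) = a \<or> f (XV i) = b" if i: "i \<in> {1..n}" for i
    using T[OF i] by blast
  have Txy: "(f (XV i) = a \<and> f (YV i) = c) \<or> (f (XV i) = b \<and> f (YV i) = a)" if i: "i \<in> {1..n}" for i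
    using T[OF i] by blast
  define u where "u i = (if f (XV i) = a then 1 else 0::nat)" for i
  have "is_solution_I n I u"
    unfolding is_solution_I_def
  proof (intro conjI ballI)
    fix i assume "i \<in> {1..n}" then show "u i \<in> {0,1}" unfolding u_def by auto
  next
    fix k assume kI: "k \<in> I"
    show "sat_con u k"
    proof (cases k)
      case (EqOr0 i j l)
      with wf[OF kI] have ijl: "i \<in> {1..n}" "j \<in> {1..n}" "l \<in> {1..n}" by auto
      have mm: "(XV i, XV j, YV l) \<in> Ncons_J n I" using kI EqOr0 by (simp add: memC11)
      have "u i = u j \<or> u l = 0" unfolding u_def
        by (rule h11[OF _ _ _ Tx[OF ijl(1)] Tx[OF ijl(2)] Txy[OF ijl(3)] NC[OF mm]]) (use dist in auto)
      then show ?thesis using EqOr0 by simp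
    next
      case (EqOr1 i j l)
      with wf[OF kI] have ijl: "i \<in> {1..n}" "j \<in> {1..n}" "l \<in> {1..n}" by auto
      have mm: "(YV i, YV j, XV l) \<in> Ncons_J n I" using kI EqOr1 by (simp add: memC12)
      have "u i = u j \<or> u l = 1" unfolding u_def
        by (rule h12[OF _ _ _ Txy[OF ijl(1)] Txy[OF ijl(2)] Tx[OF ijl(3)] NC[OF mm]]) (use dist in auto)
      then show ?thesis using EqOr1 by simp
    next
      case (Is1 i)
      have "(X, XV i) \<in> Eqcons_J I" using kI Is1 unfolding Eqcons_J_def by blast
      from EC[OF this] show ?thesis using Is1 unfolding u_def a_def by auto
    next
      case (Is0 i)
      with wf[OF kI] have i: "i \<in> {1..n}" by auto
      have "(X, YV i) \<in> Eqcons_J I" using kI Is0 unfolding Eqcons_J_def by blast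
      from EC[OF this] have ya: "f (YV i) = a" unfolding a_def by simp
      have "f (XV i) \<noteq> a" using Txy[OF i] dist ya by auto
      then have "u i = 0" unfolding u_def by simp
      then show ?thesis using Is0 by simp
    qed
  qed
  then show "\<exists>u. is_solution_I n I u" by blast
qed

end
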